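(* Fix $m\ge1$, $n\ge0$ and $i\in Ag$. Every labelled sequent derivable in $\mathsf{G3Ldm}_{n}^{m}+\mathsf{PR}$ is derivable in $\mathsf{G3Ldm}_{n}^{m}+\mathsf{PR}$ without any use of the rule $(\mathsf{refl}_i)$.
   Context: Language. $Ag=\{1,\dots,m\}$, $Var$ a countable set of propositional variables; formulas $\phi ::= p \mid \overline{p} \mid (\phi\wedge\phi) \mid (\phi\vee\phi) \mid \Box\phi \mid \Diamond\phi \mid [i]\phi \mid \langle i\rangle\phi$. Labelled sequents $\mathcal{R},\Gamma$: $\mathcal{R}$ a multiset of relational atoms $\mathcal{R}_ixy$, $\Gamma$ a multiset of labelled formulas $x:\phi$. Derivations are finite trees whose leaves are $(\mathsf{id})$ instances. Rules of $\mathsf{G3Ldm}_{n}^{m}$ (premise(s) / conclusion): $(\mathsf{id})$: / $\mathcal{R}, w:p, w:\overline{p},\Gamma$. $(\wedge)$: $\mathcal{R}, w:\phi\wedge\psi, w:\phi,\Gamma$ and $\mathcal{R}, w:\phi\wedge\psi, w:\psi,\Gamma$ / $\mathcal{R}, w:\phi\wedge\psi,\Gamma$. $(\vee)$: $\mathcal{R}, w:\phi\vee\psi, w:\phi, w:\psi,\Gamma$ / $\mathcal{R}, w:\phi\vee\psi,\Gamma$. $([i])$: $\mathcal{R},\mathcal{R}_iwv, v:\phi,\Gamma$ / $\mathcal{R}, w:[i]\phi,\Gamma$ ($v$ fresh). $(\Box)$: $\mathcal{R}, w:\Box\phi, v:\phi,\Gamma$ / $\mathcal{R}, w:\Box\phi,\Gamma$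 ($v$ fresh). $(\Diamond)$: $\mathcal{R}, w:\Diamond\phi, u:\phi,\Gamma$ / $\mathcal{R}, w:\Diamond\phi,\Gamma$. $(\mathsf{IOA})$: $\mathcal{R},\mathcal{R}_1u_1v,\dots,\mathcal{R}_mu_mv,\Gamma$ / $\mathcal{R},\Gamma$ ($v$ fresh). $(\langle i\rangle)$: $\mathcal{R},\mathcal{R}_iwu, w:\langle i\rangle\phi, u:\phi,\Gamma$ / $\mathcal{R},\mathcal{R}_iwu, w:\langle i\rangle\phi,\Gamma$. $(\mathsf{refl}_i)$: $\mathcal{R},\mathcal{R}_iww,\Gamma$ / $\mathcal{R},\Gamma$. $(\mathsf{eucl}_i)$: $\mathcal{R},\mathcal{R}_iwu,\mathcal{R}_iwv,\mathcal{R}_iuv,\Gamma$ / $\mathcal{R},\mathcal{R}_iwu,\mathcal{R}_iwv,\Gamma$. $(\mathsf{APC}^i_n)$ (only if $n>0$): premises $\mathcal{R},\mathcal{R}_iw_kw_j,\Gamma$ for all $0\le k\le n-1$, $k+1\le j\le n$ / $\mathcal{R},\Gamma$. "Fresh" means not occurring in the conclusion. One copy of the indexed rules for each agent. $\mathsf{G3Ldm}_{n}^{m}+\mathsf{PR}$ adds, for each $i\in Ag$, the propagation rule $(\mathsf{Pr}_i)$: $\mathcal{R}, w:\langle i\rangle\phi, u:\phi,\Gamma$ / $\mathcal{R}, w:\langle i\rangle\phi,\Gamma$, applicable only if $w=u$ or there are labels $w=z_0,\dots,z_k=u$ ($k\ge1$) with $\mathcal{R}_iz_lz_{l+1}\in\mathcal{R}$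 or $\mathcal{R}_iz_{l+1}z_l\in\mathcal{R}$ for each $l<k$. *)

theory Defs
  imports "HOL-Library.Multiset"
begin

datatype fm =
    PVar nat
  | NVar nat
  | Conj fm fm
  | Disj fm fm
  | Box fm
  | Dia fm
  | Stit nat fm
  | DStit nat fm

type_synonym rel_atom = "nat \<times> nat \<times> nat"   \<comment> \<open>(i, x, y) stands for R_i x y\<close>
type_synonym lform = "nat \<times> fm"              \<comment> \<open>(x, phi) stands for x : phi\<close>

definition rlabels :: "rel_atom multiset \<Rightarrow> nat set" where
  "rlabels R = (\<Union>(i, x, y) \<in> set_mset R. {x, y})"

definition flabels :: "lform multiset \<Rightarrow> nat set" where
  "flabels G = fst ` set_mset G"

definition fresh :: "nat \<Rightarrow> rel_atom multiset \<Rightarrow> lform multiset \<Rightarrow> bool" where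
  "fresh v R G \<longleftrightarrow> v \<notin> rlabels R \<and> v \<notin> flabels G"

definition ipath :: "nat \<Rightarrow> rel_atom multiset \<Rightarrow> nat \<Rightarrow> nat \<Rightarrow> bool" where
  "ipath i R w u \<longleftrightarrow> (\<lambda>x y. (i, x, y) \<in># R \<or> (i, y, x) \<in># R)\<^sup>*\<^sup>* w u"

text \<open>Derivability in G3Ldm_n^m + PR; the parameter E is the set of agents i for which
  the rule (refl_i) is NOT available. E = {} gives the full calculus.\<close>
inductive der :: "nat \<Rightarrow> nat \<Rightarrow> nat set \<Rightarrow> rel_atom multiset \<Rightarrow> lform multiset \<Rightarrow> bool"
  for m :: nat and n :: nat and E :: "nat set" where
  id: "der m n E R (add_mset (w, PVar p) (add_mset (w, NVar p) G))"
| conj: "der m n E R (add_mset (w, Conj A B) (add_mset (w, A) G)) \<Longrightarrow>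
         der m n E R (add_mset (w, Conj A B) (add_mset (w, B) G)) \<Longrightarrow>
         der m n E R (add_mset (w, Conj A B) G)"
| disj: "der m n E R (add_mset (w, Disj A B) (add_mset (w, A) (add_mset (w, B) G))) \<Longrightarrow>
         der m n E R (add_mset (w, Disj A B) G)"
| stit: "i \<in> {1..m} \<Longrightarrow> fresh v R (add_mset (w, Stit i A) G) \<Longrightarrow>
         der m n E (add_mset (i, w, v) R) (add_mset (v, A) G) \<Longrightarrow>
         der m n E R (add_mset (w, Stit i A) G)"
| box: "fresh v R (add_mset (w, Box A) G) \<Longrightarrow>
        der m n E R (add_mset (w, Box A) (add_mset (v, A) G)) \<Longrightarrow>
        der m n E R (add_mset (w, Box A) G)"
| dia: "der m n E R (add_mset (w, Dia A) (add_mset (u, A) G)) \<Longrightarrow>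
        der m n E R (add_mset (w, Dia A) G)"
| ioa: "fresh v R G \<Longrightarrow>
        der m n E (R + image_mset (\<lambda>k. (k, us k, v)) (mset [1..<Suc m])) G \<Longrightarrow>
        der m n E R G"
| dstit: "i \<in> {1..m} \<Longrightarrow>
          der m n E (add_mset (i, w, u) R) (add_mset (w, DStit i A) (add_mset (u, A) G)) \<Longrightarrow>
          der m n E (add_mset (i, w, u) R) (add_mset (w, DStit i A) G)"
| refl: "i \<in> {1..m} \<Longrightarrow> i \<notin> E \<Longrightarrow>
         der m n E (add_mset (i, w, w) R) G \<Longrightarrow> der m n E R G"
| eucl: "i \<in> {1..m} \<Longrightarrow>
         der m n E (add_mset (i, w, u) (add_mset (i, w, v) (add_mset (i, u, v) R))) G \<Longrightarrow>
         der m n E (add_mset (i, w, u) (add_mset (i, w, v) R)) G"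
| apc: "n > 0 \<Longrightarrow> i \<in> {1..m} \<Longrightarrow>
        (\<And>k j. k \<le> n - 1 \<Longrightarrow> k + 1 \<le> j \<Longrightarrow> j \<le> n \<Longrightarrow>
           der m n E (add_mset (i, ws k, ws j) R) G) \<Longrightarrow>
        der m n E R G"
| pr: "i \<in> {1..m} \<Longrightarrow> ipath i R w u \<Longrightarrow>
       der m n E R (add_mset (w, DStit i A) (add_mset (u, A) G)) \<Longrightarrow>
       der m n E R (add_mset (w, DStit i A) G)"

end

theory Submission
  imports Defs
begin

definition simr :: "nat \<Rightarrow> rel_atom multiset \<Rightarrow> rel_atom multiset \<Rightarrow> bool" where
  "simr i R R' \<longleftrightarrow> R' \<subseteq># R \<and> filter_mset (\<lambda>a. fst a \<noteq> i) R \<subseteq># R'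
     \<and> (\<forall>x y. (i, x, y) \<in># R \<longrightarrow> ipath i R' x y)"

lemma ipath_refl: "ipath i R x x"
  by (simp add: ipath_def)

lemma ipath_edge: "(i,x,y) \<in># R \<Longrightarrow> ipath i R x y"
  unfolding ipath_def by (rule r_into_rtranclp) simp

lemma ipath_trans: "ipath i R x y \<Longrightarrow> ipath i R y z \<Longrightarrow> ipath i R x z"
  unfolding ipath_def by (rule rtranclp_trans)

lemma ipath_sym: "ipath i R x y \<Longrightarrow> ipath i R y x"
  unfolding ipath_def
proof (induction rule: rtranclp_induct)
  case base then show ?case by simp
next
  case (step y z)
  then have "(\<lambda>x y. (i, x, y) \<in># R \<or> (i, y, x) \<in># R) z y" by blast
  then show ?case using step(3) by (rule converse_rtranclp_into_rtranclp)
qed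

lemma ipath_mono: "R \<subseteq># R'' \<Longrightarrow> ipath i R x y \<Longrightarrow> ipath i R'' x y"
  unfolding ipath_def
  by (erule rtranclp_mono[THEN predicate2D, rotated]) (auto dest: mset_subset_eqD)

lemma ipath_transfer:
  assumes "simr i R R'" "ipath j R x y"
  shows "ipath j R' x y"
  using assms(2) unfolding ipath_def[of j R]
proof (induction rule: rtranclp_induct)
  case base then show ?case by (simp add: ipath_refl)
next
  case (step y z)
  have "ipath j R' y z"
  proof (cases "j = i")
    case True
    then show ?thesis using step(2) assms(1) unfolding simr_def by (auto intro: ipath_sym)
  next
    case False
    have F: "filter_mset (\<lambda>a. fst a \<noteq> i) R \<subseteq># R'" using assms(1) unfolding simr_def by blast
    have "(j,y,z) \<in># R' \<or> (j,z,y) \<in># R'"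
    proof (cases "(j,y,z) \<in># R")
      case True
      then have "(j,y,z) \<in># filter_mset (\<lambda>a. fst a \<noteq> i) R" using False by simp
      then show ?thesis using F by (blast dest: mset_subset_eqD)
    next
      case c: False
      then have "(j,z,y) \<in># filter_mset (\<lambda>a. fst a \<noteq> i) R" using False step(2) by simp
      then show ?thesis using F by (blast dest: mset_subset_eqD)
    qed
    then show ?thesis by (auto intro: ipath_edge ipath_sym)
  qed
  then show ?case using step(3) by (rule ipath_trans[rotated])
qed

lemma rlabels_mono: "R' \<subseteq># R \<Longrightarrow> rlabels R' \<subseteq> rlabels R"
  unfolding rlabels_def by (auto dest: mset_subset_eqD)

lemma fresh_mono: "fresh v R G \<Longrightarrow> R' \<subseteq># R \<Longrightarrow> fresh v R' G"
  unfolding fresh_def using rlabels_mono by blast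

lemma simr_plus: "simr i R R' \<Longrightarrow> simr i (R + S) (R' + S)"
  unfolding simr_def
  by (auto intro: ipath_edge ipath_mono[of R' "R' + S"] simp: subset_mset.add_mono)

lemma simr_add: "simr i R R' \<Longrightarrow> simr i (add_mset a R) (add_mset a R')"
  using simr_plus[of i R R' "{#a#}"] by simp

lemma sub_add: "R \<subseteq># add_mset x R"
  using mset_subset_eq_add_left[of R "{#x#}"] by simp

lemma simr_sub: "simr i R R' \<Longrightarrow> R' \<subseteq># R"
  unfolding simr_def by blast

lemma simr_iadd:
  assumes "simr i R R'" "ipath i R' x y"
  shows "simr i (add_mset (i,x,y) R) R'"
proof -
  have a: "R' \<subseteq># R" "filter_mset (\<lambda>a. fst a \<noteq> i) R \<subseteq># R'"
    "\<forall>x y. (i, x, y) \<in># R \<longrightarrow> ipath i R' x y" using assms(1) unfolding simr_def by blast+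
  have "R' \<subseteq># add_mset (i,x,y) R" using a(1) sub_add by (rule subset_mset.order_trans)
  moreover have "filter_mset (\<lambda>a. fst a \<noteq> i) (add_mset (i,x,y) R) \<subseteq># R'" using a(2) by simp
  moreover have "\<forall>u v. (i, u, v) \<in># add_mset (i,x,y) R \<longrightarrow> ipath i R' u v"
    using a(3) assms(2) by simp
  ultimately show ?thesis unfolding simr_def by blast
qed

lemma main:
  assumes "der m n {} R G" "i \<in> {1..m}"
  shows "simr i R R' \<Longrightarrow> der m n {i} R' G"
  using assms(1)
proof (induction arbitrary: R' rule: der.induct)
  case (id R w p G)
  show ?case by (rule der.id)
next
  case (conj R w A B G)
  show ?case by (rule der.conj[OF conj.IH(1)[OF conj.prems] conj.IH(2)[OF conj.prems]])
next
  case (disj R w A B G)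
  show ?case by (rule der.disj[OF disj.IH[OF disj.prems]])
next
  case (stit j v R w A G)
  have s: "R' \<subseteq># R" using stit.prems by (rule simr_sub)
  show ?case
    by (rule der.stit[OF stit.hyps(1) fresh_mono[OF stit.hyps(2) s]])
      (rule stit.IH, rule simr_add, rule stit.prems)
next
  case (box v R w A G)
  have s: "R' \<subseteq># R" using box.prems by (rule simr_sub)
  show ?case
    by (rule der.box[OF fresh_mono[OF box.hyps(1) s]])
      (rule box.IH, rule box.prems)
next
  case (dia R w A u G)
  show ?case by (rule der.dia[OF dia.IH[OF dia.prems]])
next
  case (ioa v R G us)
  have s: "R' \<subseteq># R" using ioa.prems by (rule simr_sub)
  show ?case
    by (rule der.ioa[OF fresh_mono[OF ioa.hyps(1) s]])
      (rule ioa.IH, rule simr_plus, rule ioa.prems)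
next
  case (dstit j w u R A G)
  have mem: "(j,w,u) \<in># add_mset (j, w, u) R" by simp
  show ?case
  proof (cases "j = i")
    case True
    have "ipath j (add_mset (j, w, u) R) w u" using mem by (rule ipath_edge)
    then have "ipath j R' w u" by (rule ipath_transfer[OF dstit.prems])
    then show ?thesis by (rule der.pr[OF dstit.hyps(1) _ dstit.IH[OF dstit.prems]])
  next
    case False
    have "(j,w,u) \<in># filter_mset (\<lambda>a. fst a \<noteq> i) (add_mset (j, w, u) R)" using False by simp
    moreover have "filter_mset (\<lambda>a. fst a \<noteq> i) (add_mset (j, w, u) R) \<subseteq># R'"
      using dstit.prems unfolding simr_def by blast
    ultimately have "(j,w,u) \<in># R'" by (blast dest: mset_subset_eqD)
    then obtain R0 where R0: "R' = add_mset (j,w,u) R0" by (metis mset_add)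
    have "der m n {i} (add_mset (j,w,u) R0) (add_mset (w, DStit j A) (add_mset (u, A) G))"
      using dstit.IH[OF dstit.prems] unfolding R0 .
    then have "der m n {i} (add_mset (j,w,u) R0) (add_mset (w, DStit j A) G)"
      by (rule der.dstit[OF dstit.hyps(1)])
    then show ?thesis unfolding R0 .
  qed
next
  case (refl j w R G)
  show ?case
  proof (cases "j = i")
    case True
    have "simr i (add_mset (i,w,w) R) R'" using refl.prems ipath_refl by (rule simr_iadd)
    then show ?thesis using refl.IH True by blast
  next
    case False
    then have "j \<notin> {i}" by simp
    then show ?thesis
      by (rule der.refl[OF refl.hyps(1) _ refl.IH[OF simr_add[OF refl.prems]]])
  qed
next
  case (eucl j w u v R G)
  show ?case
  proof (cases "j = i")
    case True
    have "ipath j (add_mset (j, w, u) (add_mset (j, w, v) R)) w u"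
      "ipath j (add_mset (j, w, u) (add_mset (j, w, v) R)) w v" by (simp_all add: ipath_edge)
    then have "ipath j R' w u" "ipath j R' w v" using ipath_transfer[OF eucl.prems] by blast+
    then have "ipath i R' u v" using True by (meson ipath_sym ipath_trans)
    then have "simr i (add_mset (i, u, v) (add_mset (j, w, u) (add_mset (j, w, v) R))) R'"
      by (rule simr_iadd[OF eucl.prems])
    moreover have "add_mset (i, u, v) (add_mset (j, w, u) (add_mset (j, w, v) R)) =
        add_mset (j, w, u) (add_mset (j, w, v) (add_mset (j, u, v) R))"
      using True by (simp add: add_mset_commute)
    ultimately have "simr i (add_mset (j, w, u) (add_mset (j, w, v) (add_mset (j, u, v) R))) R'"
      by simp
    then show ?thesis by (rule eucl.IH)
  next
    case False
    let ?F = "filter_mset (\<lambda>a. fst a \<noteq> i)"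
    have "?F (add_mset (j, w, u) (add_mset (j, w, v) R)) = add_mset (j, w, u) (add_mset (j, w, v) (?F R))"
      using False by simp
    then have "add_mset (j, w, u) (add_mset (j, w, v) (?F R)) \<subseteq># R'"
      using eucl.prems unfolding simr_def by metis
    then obtain R0 where R0: "R' = add_mset (j, w, u) (add_mset (j, w, v) R0)"
      by (metis mset_subset_eq_exists_conv union_mset_add_mset_left)
    have "simr i (add_mset (j, u, v) (add_mset (j, w, u) (add_mset (j, w, v) R))) (add_mset (j, u, v) R')"
      using eucl.prems by (rule simr_add)
    then have "simr i (add_mset (j, w, u) (add_mset (j, w, v) (add_mset (j, u, v) R))) (add_mset (j, w, u) (add_mset (j, w, v) (add_mset (j, u, v) R0)))"
      unfolding R0 by (simp add: add_mset_commute)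
    then have "der m n {i} (add_mset (j, w, u) (add_mset (j, w, v) (add_mset (j, u, v) R0))) G"
      by (rule eucl.IH)
    then have "der m n {i} (add_mset (j, w, u) (add_mset (j, w, v) R0)) G"
      by (rule der.eucl[OF eucl.hyps(1)])
    then show ?thesis unfolding R0 .
  qed
next
  case (apc j ws R G)
  show ?case
  proof (rule der.apc[where i=j and ws=ws, OF apc.hyps(1,2)])
    fix k l assume kl: "k \<le> n - 1" "k + 1 \<le> l" "l \<le> n"
    show "der m n {i} (add_mset (j, ws k, ws l) R') G"
      by (rule apc.IH[OF kl simr_add[OF apc.prems]])
  qed
next
  case (pr j R w u A G)
  show ?case
    by (rule der.pr[OF pr.hyps(1) ipath_transfer[OF pr.prems pr.hyps(2)] pr.IH[OF pr.prems]])
qed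

theorem lemma2:
  fixes m n i :: nat and R :: "rel_atom multiset" and G :: "lform multiset"
  assumes "m \<ge> 1" and "i \<in> {1..m}" and "der m n {} R G"
  shows "der m n {i} R G"
  using main[OF assms(3) assms(2)] by (simp add: simr_def ipath_edge)

end
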